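(* Let $p\in(1,\infty)$ with $p\ne2$, and for $b\in[0,1]$ let \[ R(p,b):=\big(b^{p-1}+(1-b)^{p-1}\big)\big(b^{\frac1{p-1}}+(1-b)^{\frac1{p-1}}\big)^{p-1}. \] Then there exists $b_p\in(0,\tfrac12)$ such that (i) $\frac{\partial R(p,b)}{\partial b}>0$ for $b\in(0,b_p)$, and hence $R(p,b)$ is strictly increasing in $b\in[0,b_p]$; (ii) $\frac{\partial R(p,b)}{\partial b}<0$ for $b\in(b_p,\tfrac12)$, and hence $R(p,b)$ is decreasing in $b\in[b_p,\tfrac12]$. Consequently, $b_p$ is the unique maximizer of $R(p,b)$ over $b\in[0,\tfrac12]$. *)

theory Defs
  imports "HOL-Analysis.Analysis"
begin

definition R :: "real \<Rightarrow> real \<Rightarrow> real" where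
  "R p b = (b powr (p - 1) + (1 - b) powr (p - 1)) *
           (b powr (1 / (p - 1)) + (1 - b) powr (1 / (p - 1))) powr (p - 1)"

end

theory Submission
  imports Defs
begin


lemma sinh_lt_mult_cosh:
  fixes w :: real assumes "0 < w" shows "sinh w < w * cosh w"
proof -
  have "(\<lambda>w. w * cosh w - sinh w) 0 < (\<lambda>w. w * cosh w - sinh w) w"
  proof (rule DERIV_pos_imp_increasing_open[OF assms])
    fix x :: real assume "0 < x" "x < w"
    show "\<exists>y. ((\<lambda>w. w * cosh w - sinh w) has_real_derivative y) (at x) \<and> 0 < y"
      by (rule exI[of _ "x * sinh x"]) (auto intro!: derivative_eq_intros simp: \<open>0<x\<close>)
  qed (intro continuous_intros)
  then show ?thesis by simp
qed

definition F1 :: "real \<Rightarrow> real" where "F1 y = y * sinh y / cosh y"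
definition F2 :: "real \<Rightarrow> real" where "F2 y = y * cosh y / sinh y"
definition dF1 :: "real \<Rightarrow> real" where "dF1 y = (sinh y * cosh y + y) / (cosh y)^2"
definition dF2 :: "real \<Rightarrow> real" where "dF2 y = (sinh y * cosh y - y) / (sinh y)^2"

lemma cosh_pos': "0 < cosh (y::real)" by simp

lemma F1_deriv: "(F1 has_real_derivative dF1 y) (at y)"
proof -
  have c: "cosh y \<noteq> 0" using cosh_pos'[of y] by linarith
  have hp: "cosh y * cosh y = 1 + sinh y * sinh y" using hyperbolic_pythagoras[of y] by (simp add: power2_eq_square)
  show ?thesis unfolding F1_def[abs_def] dF1_def
    by (auto intro!: derivative_eq_intros simp: c power2_eq_square field_simps hp)
qed

lemma F2_deriv: assumes "0 < y" shows "(F2 has_real_derivative dF2 y) (at y)"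
proof -
  have s: "sinh y \<noteq> 0" using assms by simp
  have yne: "y \<noteq> 0" using assms by simp
  have hp: "cosh y * cosh y = 1 + sinh y * sinh y" using hyperbolic_pythagoras[of y] by (simp add: power2_eq_square)
  show ?thesis unfolding F2_def[abs_def] dF2_def
    by (auto intro!: derivative_eq_intros simp: s power2_eq_square field_simps hp yne)
qed

lemma dF2_deriv: assumes "0 < y"
  shows "(dF2 has_real_derivative 2 * (y * cosh y - sinh y) / (sinh y)^3) (at y)"
proof -
  have s: "sinh y \<noteq> 0" using assms by simp
  have hp: "cosh y * cosh y = 1 + sinh y * sinh y" using hyperbolic_pythagoras[of y] by (simp add: power2_eq_square)
  have d: "(dF2 has_real_derivative ((cosh y * cosh y + sinh y * sinh y - 1) * (sinh y)^2 - (sinh y * cosh y - y) * (2 * cosh y * sinh y)) / ((sinh y)^2 * (sinh y)^2)) (at y)"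
    unfolding dF2_def[abs_def]
    using assms by (auto intro!: derivative_eq_intros simp: power2_eq_square)
  have num: "(cosh y * cosh y + sinh y * sinh y - 1) * (sinh y)^2 - (sinh y * cosh y - y) * (2 * cosh y * sinh y) = sinh y * (2 * (y * cosh y - sinh y))"
    using hp by algebra
  have "((cosh y * cosh y + sinh y * sinh y - 1) * (sinh y)^2 - (sinh y * cosh y - y) * (2 * cosh y * sinh y)) / ((sinh y)^2 * (sinh y)^2) = 2 * (y * cosh y - sinh y) / (sinh y)^3"
    unfolding num using s by (simp add: power2_eq_square power3_eq_cube)
  with d show ?thesis by simp
qed

lemma dF2_mono: assumes "0 < y" "y \<le> z" shows "dF2 y \<le> dF2 z"
proof (rule DERIV_nonneg_imp_nondecreasing[OF assms(2)])
  fix x assume "y \<le> x" "x \<le> z"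
  then have x: "0 < x" using assms by simp
  show "\<exists>d. (dF2 has_real_derivative d) (at x) \<and> 0 \<le> d"
    using dF2_deriv[OF x] sinh_lt_mult_cosh[OF x] x by (intro exI[of _ "2 * (x * cosh x - sinh x) / (sinh x)^3"]) auto
qed

lemma dF2_le_dF1: assumes "0 < y" shows "dF2 y \<le> dF1 y"
proof -
  have s: "0 < sinh y" using assms by simp
  have c: "0 < cosh y" by simp
  have hp: "cosh y * cosh y = 1 + sinh y * sinh y" using hyperbolic_pythagoras[of y] by (simp add: power2_eq_square)
  have l: "sinh y < y * cosh y" by (rule sinh_lt_mult_cosh[OF assms])
  have "(sinh y * cosh y - y) * (cosh y)^2 \<le> (sinh y * cosh y + y) * (sinh y)^2"
  proof -
    have "sinh y * cosh y \<le> y * cosh y * cosh y" using l c by (simp add: mult_right_mono less_imp_le)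
    also have "\<dots> \<le> y * (cosh y * cosh y + sinh y * sinh y)" using assms by (simp add: mult_left_mono)
    finally show ?thesis by (simp add: power2_eq_square algebra_simps hp)
  qed
  then show ?thesis unfolding dF1_def dF2_def using s c
    by (simp add: divide_simps)
qed

lemma dF1_pos: assumes "0 < y" shows "0 < dF1 y"
  using assms unfolding dF1_def by (simp add: add_pos_pos)

lemma F1_strict: assumes "0 < u" "u < v" shows "F1 u < F1 v"
proof (rule DERIV_pos_imp_increasing[OF assms(2)])
  fix x assume "u \<le> x" "x \<le> v"
  then have x: "0 < x" using assms by simp
  show "\<exists>d. (F1 has_real_derivative d) (at x) \<and> 0 < d"
    using F1_deriv[of x] dF1_pos[OF x] by blast
qed

lemma key_ineq:
  assumes x: "0 < x" and a: "0 < a2" "a2 < a1" "a2 < 1"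
  shows "F2 (a1 * x) - F2 (a2 * x) < F1 ((1 + a1) * x) - F1 ((1 - a2) * x)"
proof -
  let ?L = "\<lambda>y. F1 (y + x) - F2 y"
  have "?L (a2 * x) \<le> ?L (a1 * x)"
  proof (rule DERIV_nonneg_imp_nondecreasing[where f = ?L])
    show "a2 * x \<le> a1 * x" using a x by simp
  next
    fix y assume "a2 * x \<le> y" "y \<le> a1 * x"
    then have y: "0 < y" using a x by (smt (verit) mult_pos_pos)
    have yx: "0 < y + x" using y x by simp
    have d: "(?L has_real_derivative dF1 (y + x) - dF2 y) (at y)"
      using F2_deriv[OF y] F1_deriv[of "y + x"]
      by (auto intro!: derivative_eq_intros DERIV_chain2[where f = F1])
    have "dF2 y \<le> dF2 (y + x)" using dF2_mono[OF y] x by simp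
    also have "\<dots> \<le> dF1 (y + x)" using dF2_le_dF1[OF yx] .
    finally show "\<exists>d. (?L has_real_derivative d) (at y) \<and> 0 \<le> d" using d by auto
  qed
  moreover have "F1 ((1 - a2) * x) < F1 ((1 + a2) * x)"
    using a x by (intro F1_strict) auto
  ultimately show ?thesis by (simp add: algebra_simps)
qed



definition Hf :: "real \<Rightarrow> real \<Rightarrow> real" where
  "Hf r x = cosh (r*x) * sinh ((1 - 1/r)*x) - r * cosh ((1/r)*x) * sinh ((r-1)*x)"

definition Psi :: "real \<Rightarrow> real \<Rightarrow> real" where
  "Psi r x = ln (cosh (r*x)) + ln (sinh ((1 - 1/r)*x)) - ln (cosh ((1/r)*x)) - ln (sinh ((r-1)*x)) - ln r"

lemma Psi_deriv:
  assumes r: "1 < r" and x: "0 < x"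
  shows "(Psi r has_real_derivative
     (F1 (r*x) - F1 ((1/r)*x) - (F2 ((r-1)*x) - F2 ((1-1/r)*x))) / x) (at x)"
proof -
  have a2: "0 < 1 - 1/r" using r by simp
  have s1: "0 < sinh ((1 - 1/r)*x)" using a2 x by simp
  have s2: "0 < sinh ((r-1)*x)" using r x by simp
  have c1: "0 < cosh (r*x)" "0 < cosh ((1/r)*x)" by simp_all
  have d: "(Psi r has_real_derivative
      (sinh (r*x) * r / cosh (r*x) + cosh ((1 - 1/r)*x) * (1 - 1/r) / sinh ((1 - 1/r)*x)
       - sinh ((1/r)*x) * (1/r) / cosh ((1/r)*x) - cosh ((r-1)*x) * (r-1) / sinh ((r-1)*x))) (at x)"
    unfolding Psi_def[abs_def] using s1 s2 c1
    by (auto intro!: derivative_eq_intros)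
  have xne: "x \<noteq> 0" using x by simp
  have "sinh (r*x) * r / cosh (r*x) + cosh ((1 - 1/r)*x) * (1 - 1/r) / sinh ((1 - 1/r)*x)
       - sinh ((1/r)*x) * (1/r) / cosh ((1/r)*x) - cosh ((r-1)*x) * (r-1) / sinh ((r-1)*x)
     = (F1 (r*x) - F1 ((1/r)*x) - (F2 ((r-1)*x) - F2 ((1-1/r)*x))) / x"
    unfolding F1_def F2_def using xne by (simp add: field_simps)
  with d show ?thesis by simp
qed

lemma Psi_deriv_pos:
  assumes r: "1 < r" and x: "0 < x"
  shows "0 < (F1 (r*x) - F1 ((1/r)*x) - (F2 ((r-1)*x) - F2 ((1-1/r)*x))) / x"
proof -
  have a: "0 < 1 - 1/r" "1 - 1/r < r - 1" "1 - 1/r < 1"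
  proof -
    show "0 < 1 - 1/r" using r by simp
    show "1 - 1/r < 1" using r by simp
    have "0 < (r-1)^2 / r" using r by simp
    moreover have "(r-1)^2/r = (r-1) - (1 - 1/r)" using r by (simp add: field_simps power2_eq_square)
    ultimately show "1 - 1/r < r - 1" by simp
  qed
  have "F2 ((r-1)*x) - F2 ((1-1/r)*x) < F1 ((1 + (r-1))*x) - F1 ((1 - (1-1/r))*x)"
    by (rule key_ineq[OF x a])
  then show ?thesis using x by simp
qed

lemma Psi_strict:
  assumes r: "1 < r" and "0 < u" "u < v" shows "Psi r u < Psi r v"
proof (rule DERIV_pos_imp_increasing[OF assms(3)])
  fix x assume "u \<le> x" "x \<le> v"
  then have x: "0 < x" using assms by simp
  show "\<exists>d. (Psi r has_real_derivative d) (at x) \<and> 0 < d"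
    using Psi_deriv[OF r x] Psi_deriv_pos[OF r x] by blast
qed

lemma Hf_Psi:
  assumes r: "1 < r" and x: "0 < x"
  shows "(0 < Hf r x \<longleftrightarrow> 0 < Psi r x) \<and> (Hf r x < 0 \<longleftrightarrow> Psi r x < 0)"
proof -
  have a2: "0 < 1 - 1/r" using r by simp
  have s1: "0 < sinh ((1 - 1/r)*x)" using a2 x by simp
  have s2: "0 < sinh ((r-1)*x)" using r x by simp
  have c1: "0 < cosh (r*x)" "0 < cosh ((1/r)*x)" by simp_all
  define P1 where "P1 = cosh (r*x) * sinh ((1 - 1/r)*x)"
  define P2 where "P2 = r * cosh ((1/r)*x) * sinh ((r-1)*x)"
  have p1: "0 < P1" unfolding P1_def using s1 c1 by simp
  have p2: "0 < P2" unfolding P2_def using s2 c1 r by simp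
  have H: "Hf r x = P1 - P2" unfolding Hf_def P1_def P2_def by simp
  have P: "Psi r x = ln P1 - ln P2" unfolding Psi_def P1_def P2_def using s1 s2 c1 r x
    by (simp add: ln_mult)
  show ?thesis unfolding H P using p1 p2 by auto
qed

lemma Hf_deriv0: assumes "1 < r" shows
  "(Hf r has_real_derivative ((1 - 1/r) - r * (r - 1))) (at 0)"
  unfolding Hf_def[abs_def] using assms
  by (auto intro!: derivative_eq_intros)

lemma Hf_large:
  assumes r: "1 < r"
  shows "0 < Hf r (ln (2*r+1) / (1 - 1/r))"
proof -
  define a2 where "a2 = 1 - 1/r"
  define X where "X = ln (2*r+1) / a2"
  have a2p: "0 < a2" unfolding a2_def using r by simp
  have Xp: "0 < X" unfolding X_def using a2p r by simp
  define y where "y = exp (a2 * X)"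
  have y: "y = 2*r+1" unfolding y_def X_def using a2p r by simp
  have s: "sinh (a2 * X) = (y - 1/y) / 2" unfolding y_def sinh_def by (simp add: exp_minus field_simps)
  have spos: "0 < sinh (a2 * X)" using a2p Xp by simp
  have cl: "exp (r*X) / 2 \<le> cosh (r*X)" unfolding cosh_def by simp
  have cu: "cosh ((1/r)*X) \<le> exp ((1/r)*X)"
  proof -
    have "exp (-((1/r)*X)) \<le> exp ((1/r)*X)" using r Xp by simp
    then show ?thesis unfolding cosh_def by simp
  qed
  have su: "sinh ((r-1)*X) \<le> exp ((r-1)*X) / 2" unfolding sinh_def by simp
  have sp2: "0 \<le> sinh ((r-1)*X)" using r Xp by simp
  have e: "exp ((1/r)*X) * exp ((r-1)*X) = exp (r*X) / y"
  proof -
    have "exp ((1/r)*X) * exp ((r-1)*X) = exp ((1/r)*X + (r-1)*X)" by (simp add: mult_exp_exp)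
    also have "(1/r)*X + (r-1)*X = r*X - a2*X" unfolding a2_def by (simp add: algebra_simps)
    finally show ?thesis unfolding y_def by (simp add: exp_diff)
  qed
  have "r * cosh ((1/r)*X) * sinh ((r-1)*X) \<le> r * (exp ((1/r)*X) * (exp ((r-1)*X) / 2))"
  proof -
    have "cosh ((1/r)*X) * sinh ((r-1)*X) \<le> exp ((1/r)*X) * (exp ((r-1)*X) / 2)"
      by (rule mult_mono[OF cu su]) (use sp2 in auto)
    then show ?thesis using r by (simp add: mult_left_mono)
  qed
  also have "\<dots> = r * exp (r*X) / (2*y)" using e by simp
  also have "\<dots> < exp (r*X) / 2 * ((y - 1/y)/2)"
  proof -
    have ypos: "0 < y" using y r by simp
    have "r / (2*y) < (y - 1/y)/4" using ypos unfolding y using r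
      by (simp add: field_simps power2_eq_square add_pos_pos)
    then have "exp (r*X) * (r / (2*y)) < exp (r*X) * ((y - 1/y)/4)" by (rule mult_strict_left_mono) simp
    then show ?thesis by (simp add: field_simps)
  qed
  also have "\<dots> \<le> cosh (r*X) * sinh (a2 * X)" unfolding s[symmetric]
    using cl spos by (simp add: mult_right_mono)
  finally have "r * cosh ((1/r)*X) * sinh ((r-1)*X) < cosh (r*X) * sinh (a2 * X)" .
  then show ?thesis unfolding Hf_def X_def[symmetric] a2_def[symmetric] by (simp add: algebra_simps)
qed

lemma Hf_sign_gt1:
  assumes r: "1 < r"
  shows "\<exists>x0>0. \<forall>x>0. (0 < Hf r x \<longleftrightarrow> x0 < x) \<and> (Hf r x < 0 \<longleftrightarrow> x < x0)"
proof -
  have neg: "(1 - 1/r) - r * (r - 1) < 0"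
  proof -
    have "0 < (r-1)^2 / r" using r by simp
    moreover have "(r-1)^2/r = (r-1) - (1 - 1/r)" using r by (simp add: field_simps power2_eq_square)
    moreover have "r - 1 < r * (r - 1)"
    proof -
      have "r * (r - 1) - (r - 1) = (r-1)^2" by (simp add: algebra_simps power2_eq_square)
      moreover have "0 < (r-1)^2" using r by simp
      ultimately show ?thesis by linarith
    qed
    ultimately show ?thesis by simp
  qed
  obtain d where d: "d > 0" "\<And>h. h > 0 \<Longrightarrow> h < d \<Longrightarrow> Hf r (0 + h) < Hf r 0"
    using DERIV_neg_dec_right[OF Hf_deriv0[OF r] neg] by blast
  define X where "X = ln (2*r+1) / (1 - 1/r)"
  have Xp: "0 < X" unfolding X_def using r by simp
  define h where "h = min (d/2) (X/2)"
  have hp: "0 < h" "h < d" "h < X" unfolding h_def using d Xp by auto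
  have H0: "Hf r 0 = 0" unfolding Hf_def by simp
  have Hh: "Hf r h < 0" using d(2)[OF hp(1,2)] H0 by simp
  have HX: "0 < Hf r X" unfolding X_def by (rule Hf_large[OF r])
  have cont: "continuous_on {h..X} (Hf r)" unfolding Hf_def[abs_def] by (intro continuous_intros)
  obtain x0 where x0: "h \<le> x0" "x0 \<le> X" "Hf r x0 = 0"
  proof -
    have "\<exists>x\<ge>h. x \<le> X \<and> Hf r x = 0" using IVT'[of "Hf r" h 0 X, OF less_imp_le[OF Hh] less_imp_le[OF HX] less_imp_le[OF hp(3)] cont] .
    then obtain x where "h \<le> x" "x \<le> X" "Hf r x = 0" by auto
    then show ?thesis by (rule that)
  qed
  have x0p: "0 < x0" using x0 hp by simp
  have P0: "Psi r x0 = 0" using Hf_Psi[OF r x0p] x0(3) by auto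
  show ?thesis
  proof (intro exI[of _ x0] conjI allI impI x0p)
    fix x :: real assume x: "0 < x"
    have a: "x0 < x \<Longrightarrow> 0 < Psi r x" using Psi_strict[OF r x0p, of x] P0 by simp
    have b: "x < x0 \<Longrightarrow> Psi r x < 0" using Psi_strict[OF r x, of x0] P0 by simp
    have c: "x = x0 \<Longrightarrow> Psi r x = 0" using P0 by simp
    have iff1: "0 < Psi r x \<longleftrightarrow> x0 < x"
      using a b c by (metis linorder_neqE_linordered_idom order_less_asym order_less_irrefl)
    have iff2: "Psi r x < 0 \<longleftrightarrow> x < x0"
      using a b c by (metis linorder_neqE_linordered_idom order_less_asym order_less_irrefl)
    show "(0 < Hf r x) = (x0 < x)" using Hf_Psi[OF r x] iff1 by simp
    show "(Hf r x < 0) = (x < x0)" using Hf_Psi[OF r x] iff2 by simp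
  qed
qed

lemma Hf_recip: assumes "0 < r" shows "Hf r x = r * Hf (1/r) x"
proof -
  have s1: "sinh ((1 - r) * x) = - sinh ((r - 1) * x)"
    by (metis minus_diff_eq mult_minus_left sinh_minus)
  have s2: "sinh ((1/r - 1) * x) = - sinh ((1 - 1/r) * x)"
    by (metis minus_diff_eq mult_minus_left sinh_minus)
  have h3: "1 / (1 / r) = r" by simp
  have E: "Hf (1/r) x = cosh ((1/r)*x) * (- sinh ((r - 1) * x)) - (1/r) * cosh (r*x) * (- sinh ((1 - 1/r) * x))"
    unfolding Hf_def h3 s1 s2 ..
  have rr: "r * (1/r) = 1" using assms by simp
  have "r * Hf (1/r) x = (r * (1/r)) * cosh (r*x) * sinh ((1 - 1/r) * x) - r * cosh ((1/r)*x) * sinh ((r - 1) * x)"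
    unfolding E by (simp only: algebra_simps)
  also have "\<dots> = Hf r x" unfolding Hf_def rr by simp
  finally show ?thesis ..
qed

lemma Hf_sign:
  assumes r: "0 < r" "r \<noteq> 1"
  shows "\<exists>x0>0. \<forall>x>0. (0 < Hf r x \<longleftrightarrow> x0 < x) \<and> (Hf r x < 0 \<longleftrightarrow> x < x0)"
proof (cases "1 < r")
  case True then show ?thesis by (rule Hf_sign_gt1)
next
  case False
  then have "1 < 1/r" using r by (simp add: field_simps)
  from Hf_sign_gt1[OF this] obtain x0 where x0: "x0 > 0"
    "\<forall>x>0. (0 < Hf (1/r) x \<longleftrightarrow> x0 < x) \<and> (Hf (1/r) x < 0 \<longleftrightarrow> x < x0)" by blast
  show ?thesis
  proof (intro exI[of _ x0] conjI allI impI x0(1))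
    fix x :: real assume x: "0 < x"
    have e: "Hf r x = r * Hf (1/r) x" by (rule Hf_recip[OF r(1)])
    show "(0 < Hf r x) = (x0 < x)" using x0(2) x e r(1) by (simp add: zero_less_mult_iff)
    show "(Hf r x < 0) = (x < x0)" using x0(2) x e r(1) by (simp add: mult_less_0_iff)
  qed
qed



lemma R_deriv:
  fixes p b :: real
  assumes p: "1 < p" and b: "0 < b" "b < 1"
  defines "r \<equiv> p - 1" and "q \<equiv> 1 / (p - 1)"
  defines "A \<equiv> b powr r + (1-b) powr r" and "B \<equiv> b powr q + (1-b) powr q"
  shows "(R p has_real_derivative
     B powr (r - 1) * (r * (b powr (r-1) - (1-b) powr (r-1)) * B + A * (b powr (q-1) - (1-b) powr (q-1)))) (at b)"
proof -
  have c: "0 < 1 - b" using b by simp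
  have Bp: "0 < B" unfolding B_def using b c by (intro add_pos_pos) simp_all
  have rq: "r * q = 1" unfolding r_def q_def using p by simp
  have d: "(R p has_real_derivative
     (r * b powr (r-1) - r * (1-b) powr (r-1)) * B powr r + A * (r * B powr (r-1) * (q * b powr (q-1) - q * (1-b) powr (q-1)))) (at b)"
    unfolding R_def[abs_def] A_def B_def unfolding q_def[symmetric] unfolding r_def[symmetric] using b c Bp[unfolded B_def]
    by (auto intro!: derivative_eq_intros simp: algebra_simps)
  have Br: "B powr r = B powr (r - 1) * B" using Bp by (simp add: powr_diff)
  have "(r * b powr (r-1) - r * (1-b) powr (r-1)) * B powr r + A * (r * B powr (r-1) * (q * b powr (q-1) - q * (1-b) powr (q-1)))
     = B powr (r - 1) * (r * (b powr (r-1) - (1-b) powr (r-1)) * B + (r * q) * A * (b powr (q-1) - (1-b) powr (q-1)))"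
    unfolding Br by (simp add: algebra_simps)
  with d rq show ?thesis by simp
qed

lemma G_Hf:
  fixes r b :: real assumes r: "0 < r" and b: "0 < b" "b < 1"
  defines "q \<equiv> 1 / r" and "m \<equiv> (ln b + ln (1-b)) / 2" and "x \<equiv> (ln (1-b) - ln b) / 2"
  shows "r * (b powr (r-1) - (1-b) powr (r-1)) * (b powr q + (1-b) powr q)
     + (b powr r + (1-b) powr r) * (b powr (q-1) - (1-b) powr (q-1))
     = 4 * exp ((r+q-1)*m) * Hf r x"
proof -
  have c: "0 < 1 - b" using b by simp
  have lb: "ln b = m - x" unfolding m_def x_def by (simp add: field_simps)
  have lc: "ln (1-b) = m + x" unfolding m_def x_def by (simp add: field_simps)
  have pb: "\<And>s. b powr s = exp (s*m) * exp (-(s*x))"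
  proof -
    fix s
    have "b powr s = exp (s * ln b)" using b by (simp add: powr_def)
    also have "s * ln b = s*m + -(s*x)" unfolding lb by (simp add: algebra_simps)
    finally show "b powr s = exp (s*m) * exp (-(s*x))" by (simp only: exp_add)
  qed
  have pc: "\<And>s. (1-b) powr s = exp (s*m) * exp (s*x)"
  proof -
    fix s
    have "(1-b) powr s = exp (s * ln (1-b))" using c by (simp add: powr_def)
    also have "s * ln (1-b) = s*m + s*x" unfolding lc by (simp add: algebra_simps)
    finally show "(1-b) powr s = exp (s*m) * exp (s*x)" by (simp add: exp_add)
  qed
  have H': "Hf r x = cosh (r*x) * sinh ((1-q)*x) - r * cosh (q*x) * sinh ((r-1)*x)"
    unfolding Hf_def q_def ..
  have sh: "\<And>t::real. sinh t = (exp t - exp (-t)) / 2" by (simp add: sinh_def)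
  have ch: "\<And>t::real. cosh t = (exp t + exp (-t)) / 2" by (simp add: cosh_def)
  have n1: "exp (-((q-1)*x)) = exp ((1-q)*x)" by (simp add: algebra_simps)
  have n2: "exp ((q-1)*x) = exp (-((1-q)*x))" by (simp add: algebra_simps)
  have m1: "exp ((r-1)*m) * exp (q*m) = exp ((r+q-1)*m)" by (simp add: mult_exp_exp algebra_simps)
  have m2: "exp (r*m) * exp ((q-1)*m) = exp ((r+q-1)*m)" by (simp add: mult_exp_exp algebra_simps)
  have rq: "r * q = 1" unfolding q_def using r by simp
  define E where "E = exp ((r+q-1)*m)"
  have "r * (b powr (r-1) - (1-b) powr (r-1)) * (b powr q + (1-b) powr q)
     + (b powr r + (1-b) powr r) * (b powr (q-1) - (1-b) powr (q-1))
     = r * (exp ((r-1)*m) * exp (q*m)) * ((exp (-((r-1)*x)) - exp ((r-1)*x)) * (exp (-(q*x)) + exp (q*x)))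
       + (exp (r*m) * exp ((q-1)*m)) * ((exp (-(r*x)) + exp (r*x)) * (exp (-((q-1)*x)) - exp ((q-1)*x)))"
    unfolding pb pc by (simp add: algebra_simps)
  also have "\<dots> = r * E * ((exp (-((r-1)*x)) - exp ((r-1)*x)) * (exp (-(q*x)) + exp (q*x)))
       + E * ((exp (-(r*x)) + exp (r*x)) * (exp ((1-q)*x) - exp (-((1-q)*x))))"
    unfolding m1 m2 n1 n2 E_def ..
  also have "\<dots> = 4 * E * Hf r x"
    unfolding H' sh ch by (simp add: field_simps)
  finally show ?thesis unfolding E_def .
qed



lemma x_iff:
  fixes b x0 :: real assumes b: "0 < b" "b < 1"
  shows "(x0 < (ln (1-b) - ln b)/2 \<longleftrightarrow> b < 1/(1 + exp (2*x0))) \<and>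
         ((ln (1-b) - ln b)/2 < x0 \<longleftrightarrow> 1/(1 + exp (2*x0)) < b)"
proof -
  have c: "0 < 1 - b" using b by simp
  have l: "ln (1-b) - ln b = ln ((1-b)/b)" using b c by (simp add: ln_div)
  have q: "0 < (1-b)/b" using b c by simp
  have e: "0 < 1 + exp (2*x0)" by (simp add: add_pos_pos)
  have A: "x0 < (ln (1-b) - ln b)/2 \<longleftrightarrow> exp (2*x0) < (1-b)/b"
    unfolding l using q by (metis exp_less_cancel_iff exp_ln mult.commute pos_less_divide_eq zero_less_numeral)
  have B: "(ln (1-b) - ln b)/2 < x0 \<longleftrightarrow> (1-b)/b < exp (2*x0)"
    unfolding l using q by (metis exp_less_cancel_iff exp_ln mult.commute pos_divide_less_eq zero_less_numeral)
  have A': "exp (2*x0) < (1-b)/b \<longleftrightarrow> b < 1/(1 + exp (2*x0))"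
    using b e by (simp add: field_simps)
  have B': "(1-b)/b < exp (2*x0) \<longleftrightarrow> 1/(1 + exp (2*x0)) < b"
    using b e by (simp add: field_simps)
  show ?thesis using A B A' B' by simp
qed

lemma D_sign:
  fixes p :: real
  assumes p: "1 < p" "p \<noteq> 2" and x0: "0 < x0"
    and x0s: "\<forall>x>0. (0 < Hf (p-1) x \<longleftrightarrow> x0 < x) \<and> (Hf (p-1) x < 0 \<longleftrightarrow> x < x0)"
    and b: "0 < b" "b < 1/2"
  shows "\<exists>D. (R p has_real_derivative D) (at b) \<and>
     (0 < D \<longleftrightarrow> b < 1/(1 + exp (2*x0))) \<and> (D < 0 \<longleftrightarrow> 1/(1 + exp (2*x0)) < b)"
proof -
  define r where "r = p - 1"
  define q where "q = 1 / (p - 1)"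
  have r: "0 < r" unfolding r_def using p by simp
  have qr: "q = 1 / r" unfolding q_def r_def ..
  have b1: "b < 1" using b by simp
  have c: "0 < 1 - b" using b by simp
  define A where "A = b powr r + (1-b) powr r"
  define B where "B = b powr q + (1-b) powr q"
  define G where "G = r * (b powr (r-1) - (1-b) powr (r-1)) * B + A * (b powr (q-1) - (1-b) powr (q-1))"
  define m where "m = (ln b + ln (1-b)) / 2"
  define x where "x = (ln (1-b) - ln b) / 2"
  have d: "(R p has_real_derivative B powr (r - 1) * G) (at b)"
    using R_deriv[OF p(1) b(1) b1] unfolding G_def A_def B_def r_def q_def .
  have Bp: "0 < B" unfolding B_def using b c by (intro add_pos_pos) simp_all
  have BP: "0 < B powr (r - 1)" using Bp by simp
  have GH: "G = 4 * exp ((r+q-1)*m) * Hf r x"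
    using G_Hf[OF r b(1) b1] unfolding G_def A_def B_def qr m_def x_def .
  have xp: "0 < x" unfolding x_def using b c by simp
  have hs: "(0 < Hf r x \<longleftrightarrow> x0 < x) \<and> (Hf r x < 0 \<longleftrightarrow> x < x0)"
    using x0s xp unfolding r_def by blast
  have xi: "(x0 < x \<longleftrightarrow> b < 1/(1 + exp (2*x0))) \<and> (x < x0 \<longleftrightarrow> 1/(1 + exp (2*x0)) < b)"
    unfolding x_def by (rule x_iff[OF b(1) b1])
  have "0 < B powr (r - 1) * G \<longleftrightarrow> 0 < Hf r x"
    unfolding GH using BP by (simp add: zero_less_mult_iff)
  moreover have "B powr (r - 1) * G < 0 \<longleftrightarrow> Hf r x < 0"
    unfolding GH using BP by (simp add: mult_less_0_iff)
  ultimately show ?thesis using d hs xi by blast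
qed

lemma R_cont:
  assumes p: "1 < p" shows "continuous_on {0..1/2} (R p)"
proof -
  have r: "0 < p - 1" "0 < 1 / (p - 1)" using p by simp_all
  have B: "\<And>b::real. b \<in> {0..1/2} \<Longrightarrow> 0 < b powr (1/(p-1)) + (1-b) powr (1/(p-1))"
  proof -
    fix b :: real assume "b \<in> {0..1/2}"
    then have "0 \<le> b powr (1/(p-1))" "0 < (1-b) powr (1/(p-1))" by auto
    then show "0 < b powr (1/(p-1)) + (1-b) powr (1/(p-1))" by (rule add_nonneg_pos)
  qed
  have c1: "\<And>a. 0 < a \<Longrightarrow> continuous_on {0..1/2::real} (\<lambda>b. b powr a)"
    by (rule continuous_on_powr'[OF continuous_on_id continuous_on_const]) auto
  have c2: "\<And>a. continuous_on {0..1/2::real} (\<lambda>b. (1-b) powr a)"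
    by (rule continuous_on_powr[OF continuous_on_diff[OF continuous_on_const continuous_on_id] continuous_on_const]) auto
  have cB: "continuous_on {0..1/2::real} (\<lambda>b. b powr (1/(p-1)) + (1-b) powr (1/(p-1)))"
    by (rule continuous_on_add[OF c1[OF r(2)] c2])
  have cBr: "continuous_on {0..1/2::real} (\<lambda>b. (b powr (1/(p-1)) + (1-b) powr (1/(p-1))) powr (p - 1))"
    by (rule continuous_on_powr[OF cB continuous_on_const]) (use B in fastforce)
  have cA: "continuous_on {0..1/2::real} (\<lambda>b. b powr (p-1) + (1-b) powr (p-1))"
    by (rule continuous_on_add[OF c1[OF r(1)] c2])
  show ?thesis unfolding R_def[abs_def] by (rule continuous_on_mult[OF cA cBr])
qed



theorem proposition2p2:
  fixes p :: real
  assumes "p > 1" and "p \<noteq> 2"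
  shows "\<exists>bp. 0 < bp \<and> bp < 1/2 \<and>
    (\<forall>b\<in>{0<..<bp}. \<exists>D. ((R p) has_real_derivative D) (at b) \<and> D > 0) \<and>
    strict_mono_on {0..bp} (R p) \<and>
    (\<forall>b\<in>{bp<..<1/2}. \<exists>D. ((R p) has_real_derivative D) (at b) \<and> D < 0) \<and>
    antimono_on {bp..1/2} (R p) \<and>
    (\<forall>b\<in>{0..1/2}. b \<noteq> bp \<longrightarrow> R p b < R p bp)"
proof -
  have r: "0 < p - 1" "p - 1 \<noteq> 1" using assms by simp_all
  obtain x0 where x0: "0 < x0"
    "\<forall>x>0. (0 < Hf (p-1) x \<longleftrightarrow> x0 < x) \<and> (Hf (p-1) x < 0 \<longleftrightarrow> x < x0)"
    using Hf_sign[OF r] by blast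
  define bp where "bp = 1/(1 + exp (2*x0))"
  have e1: "1 < exp (2*x0)" using x0(1) by simp
  have bp0: "0 < bp" unfolding bp_def by (simp add: add_pos_pos)
  have bp1: "bp < 1/2"
  proof -
    have "2 < 1 + exp (2*x0)" using e1 by simp
    then have "1 / (1 + exp (2*x0)) < 1 / 2" by (intro divide_strict_left_mono) (auto simp: add_pos_pos)
    then show ?thesis unfolding bp_def .
  qed
  have DS: "\<And>b. 0 < b \<Longrightarrow> b < 1/2 \<Longrightarrow> \<exists>D. (R p has_real_derivative D) (at b) \<and>
     (0 < D \<longleftrightarrow> b < bp) \<and> (D < 0 \<longleftrightarrow> bp < b)"
    unfolding bp_def using D_sign[OF assms(1,2) x0(1,2)] by blast
  have cont: "continuous_on {0..1/2} (R p)" by (rule R_cont[OF assms(1)])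
  have inc: "\<And>x y. 0 \<le> x \<Longrightarrow> x < y \<Longrightarrow> y \<le> bp \<Longrightarrow> R p x < R p y"
  proof -
    fix x y :: real assume xy: "0 \<le> x" "x < y" "y \<le> bp"
    show "R p x < R p y"
    proof (rule DERIV_pos_imp_increasing_open[OF xy(2)])
      fix z assume z: "x < z" "z < y"
      then have "0 < z" "z < 1/2" "z < bp" using xy bp1 by auto
      then show "\<exists>D. (R p has_real_derivative D) (at z) \<and> 0 < D" using DS by blast
    next
      show "continuous_on {x..y} (R p)" using xy bp1 by (intro continuous_on_subset[OF cont]) auto
    qed
  qed
  have dec: "\<And>x y. bp \<le> x \<Longrightarrow> x < y \<Longrightarrow> y \<le> 1/2 \<Longrightarrow> R p y < R p x"
  proof -
    fix x y :: real assume xy: "bp \<le> x" "x < y" "y \<le> 1/2"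
    show "R p y < R p x"
    proof (rule DERIV_neg_imp_decreasing_open[OF xy(2)])
      fix z assume z: "x < z" "z < y"
      then have "0 < z" "z < 1/2" "bp < z" using xy bp0 by auto
      then show "\<exists>D. (R p has_real_derivative D) (at z) \<and> D < 0" using DS by blast
    next
      show "continuous_on {x..y} (R p)" using xy bp0 by (intro continuous_on_subset[OF cont]) auto
    qed
  qed
  have P1: "\<forall>b\<in>{0<..<bp}. \<exists>D. (R p has_real_derivative D) (at b) \<and> D > 0"
  proof
    fix b assume "b \<in> {0<..<bp}"
    then show "\<exists>D. (R p has_real_derivative D) (at b) \<and> D > 0" using DS[of b] bp1 by auto
  qed
  have P2: "strict_mono_on {0..bp} (R p)"
    by (rule strict_mono_onI) (use inc in auto)
  have P3: "\<forall>b\<in>{bp<..<1/2}. \<exists>D. (R p has_real_derivative D) (at b) \<and> D < 0"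
  proof
    fix b assume "b \<in> {bp<..<1/2}"
    then show "\<exists>D. (R p has_real_derivative D) (at b) \<and> D < 0" using DS[of b] bp0 by auto
  qed
  have P4: "antimono_on {bp..1/2} (R p)"
  proof (rule monotone_onI)
    fix x y assume "x \<in> {bp..1/2}" "y \<in> {bp..1/2}" "x \<le> y"
    then show "R p y \<le> R p x" using dec[of x y] by (cases "x = y") auto
  qed
  have P5: "\<forall>b\<in>{0..1/2}. b \<noteq> bp \<longrightarrow> R p b < R p bp"
  proof (intro ballI impI)
    fix b assume b: "b \<in> {0..1/2}" "b \<noteq> bp"
    show "R p b < R p bp"
    proof (cases "b < bp")
      case True then show ?thesis using inc[of b bp] b by auto
    next
      case False then have "bp < b" using b by simp
      then show ?thesis using dec[of bp b] b by auto
    qed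
  qed
  show ?thesis using bp0 bp1 P1 P2 P3 P4 P5 by blast
qed

end
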